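(* Let $q\equiv0\pmod3$ and $\mu\in\mathbb F_q^*\setminus\{1\}$. Then $\widetilde N_1(\mu)=\#\left\{c\in\mathbb F_q^*:\ \mu c^4+c^2+1\ne0,\ \eta\!\left(\dfrac{c^4}{\mu c^4+c^2+1}\right)=-1\right\}.$
   Context: $\eta$ is the quadratic character of $\mathbb F_q$: $\eta(a)=1$ if $a$ is a nonzero square, $\eta(a)=-1$ if $a$ is a non-square, $\eta(0)=0$. $\widetilde N_1(\mu)$ is the number of $c\in\mathbb F_q^*$ such that $t^3+ct^2-t-\mu c=0$ has exactly one solution $t\in\mathbb F_q$. *)

theory Defs
  imports Main
begin

definition eta :: "'a::{field,finite} \<Rightarrow> int" where
  "eta a = (if a = 0 then 0 else if (\<exists>b. b ^ 2 = a) then 1 else -1)"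

definition N1t :: "'a::{field,finite} \<Rightarrow> nat" where
  "N1t mu = card {c::'a. c \<noteq> 0 \<and>
      card {t::'a. t ^ 3 + c * t ^ 2 - t - mu * c = 0} = 1}"

end

theory Submission
  imports Defs "HOL-Algebra.Sylow" "HOL-Algebra.FiniteProduct"
begin

lemma char3:
  assumes "card (UNIV::'a::{field,finite} set) mod 3 = 0"
  shows "(3::'a) = 0"
proof -
  define G where "G = \<lparr> carrier = (UNIV :: 'a set), monoid.mult = (+), one = (0 :: 'a) \<rparr>"
  interpret group G
  proof (rule groupI)
    fix x assume x: "x \<in> carrier G"
    show "\<exists>y\<in>carrier G. y \<otimes>\<^bsub>G\<^esub> x = \<one>\<^bsub>G\<^esub>"
      by (intro bexI[of _ "-x"]) (auto simp: G_def)
  qed (auto simp: G_def add_ac)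
  have "order G = 3^1 * (card (UNIV::'a set) div 3)" using assms
    by (simp add: Coset.order_def G_def, presburger)
  then obtain H where H: "subgroup H G" "card H = 3"
    using sylow_thm[of 3 G 1] is_group by (auto simp: G_def)
  then obtain g where g: "g \<in> H" "g \<noteq> 0"
  proof -
    have "\<not> H \<subseteq> {0}"
    proof
      assume "H \<subseteq> {0}"
      hence "card H \<le> card {0::'a}" by (intro card_mono) auto
      with H(2) show False by simp
    qed
    thus ?thesis using that by blast
  qed
  interpret K0: group "G\<lparr>carrier := H\<rparr>" using subgroup.subgroup_is_group[OF H(1) is_group] .
  interpret K: comm_group "G\<lparr>carrier := H\<rparr>"
    by (rule K0.group_comm_groupI) (simp add: G_def add.commute)
  have finH: "finite H" using H(2) by (metis card.infinite zero_neq_numeral)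
  have "g [^]\<^bsub>G\<lparr>carrier := H\<rparr>\<^esub> (3::nat) = 0"
    using K.power_order_eq_one[of g] g H finH by (simp add: G_def)
  hence "g + g + g = 0" by (simp add: nat_pow_def numeral_3_eq_3 G_def add_ac)
  hence "3 * g = 0" by (simp add: algebra_simps numeral_3_eq_3 )
  with g show ?thesis by simp
qed

lemma key:
  fixes c mu :: "'a::{field,finite}"
  assumes t3: "(3::'a) = 0" and c: "c \<noteq> 0"
  shows "card {t::'a. t ^ 3 + c * t ^ 2 - t - mu * c = 0} = 1 \<longleftrightarrow>
         (mu * c ^ 4 + c ^ 2 + 1 \<noteq> 0 \<and> \<not> (\<exists>b. b^2 = c ^ 4 / (mu * c ^ 4 + c ^ 2 + 1)))"
proof -
  define f where "f = (\<lambda>t::'a. t ^ 3 + c * t ^ 2 - t - mu * c)"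
  define S where "S = {t. f t = 0}"
  define h where "h = -1/c"
  define D where "D = mu * c ^ 4 + c ^ 2 + 1"
  define F where "F = f h"
  have ch: "c * h = -1" using c by (simp add: h_def)
  have th: "\<And>x::'a. 3*x = 0" using t3 by simp
  have two: "(2::'a) \<noteq> 0"
  proof
    assume "(2::'a) = 0"
    moreover have "(3::'a) = 2 + 1" by simp
    ultimately have "(3::'a) = 1" by simp
    with t3 show False by simp
  qed
  have fu: "f (h + u) = u^3 + c*u^2 + F" for u
  proof -
    have "f (h + u) = F + 3*(h^2-1)*u + 3*h*u^2 + u^3 + c*u^2"
      unfolding F_def f_def using ch by algebra
    thus ?thesis using th by simp
  qed
  have cF: "c^3 * F = - D + 3 * c^2"
    unfolding F_def f_def D_def using ch by algebra
  hence cF': "c^3 * F = - D" using th by simp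
  have gen: "u^3 + c*u^2 + F = u^3 * (F * (1/u)^3 + c * (1/u) + 1)" if "u \<noteq> 0" for u
    using that by (simp add: field_simps power2_eq_square power3_eq_cube)
  have fs: "f t = (t - h)^3 * (F * (1/(t-h))^3 + c * (1/(t-h)) + 1)" if "t \<noteq> h" for t
  proof -
    have "f t = f (h + (t - h))" by simp
    also have "\<dots> = (t-h)^3 + c*(t-h)^2 + F" by (rule fu)
    also have "\<dots> = (t - h)^3 * (F * (1/(t-h))^3 + c * (1/(t-h)) + 1)"
      using that by (intro gen) simp
    finally show ?thesis .
  qed
  have fS: "t \<in> S \<longleftrightarrow> F * (1/(t-h))^3 + c * (1/(t-h)) + 1 = 0" if "t \<noteq> h" for t
    using fs[OF that] that by (simp add: S_def)
  have fS': "h + 1/s \<in> S \<longleftrightarrow> F * s^3 + c * s + 1 = 0" if "s \<noteq> 0" for s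
    using fS[of "h + 1/s"] that by simp
  have fin: "finite S" by simp
  show ?thesis
  proof (cases "D = 0")
    case True
    hence F0: "F = 0" using cF' c by simp
    have "h \<in> S" using fu[of 0] F0 by (simp add: S_def)
    moreover have "h - c \<in> S" using fu[of "-c"] F0 by (simp add: S_def power2_eq_square power3_eq_cube)
    ultimately have "{h, h - c} \<subseteq> S" by simp
    hence "card {h, h-c} \<le> card S" by (intro card_mono) auto
    moreover have "card {h, h-c} = 2" using c by simp
    ultimately have "card S \<noteq> 1" by linarith
    thus ?thesis using True by (simp add: S_def f_def D_def)
  next
    case False
    hence F0: "F \<noteq> 0" using cF' c by auto
    have hS: "h \<notin> S" using fu[of 0] F0 by (simp add: S_def)
    have e: "c^4 * F = - c * D"
    proof -
      have "c^4*F = c*(c^3*F)" by algebra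
      also have "\<dots> = - c * D" using cF' by simp
      finally show ?thesis .
    qed
    have "c^4 / D = (- c) / F" using e F0 False by (subst frac_eq_eq) auto
    hence kk: "c^4 / D = - c / F" by simp
    show ?thesis
    proof (cases "\<exists>b. b^2 = - c / F")
      case True
      then obtain b where b: "b^2 = - c/F" by blast
      have b0: "b \<noteq> 0" using b c F0 by auto
      have cb: "c = - F * b^2" using b F0 by (simp add: field_simps)
      have shift: "F * (s+b)^3 + c * (s+b) + 1 = F * s^3 + c * s + 1" for s
      proof -
        have "F * (s+b)^3 + c * (s+b) + 1 = F * s^3 + c * s + 1 + 3*(F*s^2*b + F*s*b^2)"
          unfolding cb by algebra
        thus ?thesis using th by simp
      qed
      have "card S \<noteq> 1"
      proof
        assume "card S = 1"
        then obtain t0 where S1: "S = {t0}" by (auto simp: card_1_singleton_iff)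
        have t0h: "t0 \<noteq> h" using hS S1 by auto
        define s0 where "s0 = 1/(t0-h)"
        have s00: "s0 \<noteq> 0" using t0h by (simp add: s0_def)
        have G0: "F * s0^3 + c * s0 + 1 = 0" using fS[OF t0h] S1 by (simp add: s0_def)
        have G1: "F * (s0+b)^3 + c * (s0+b) + 1 = 0" using shift G0 by simp
        have s10: "s0 + b \<noteq> 0" using G1 by (auto)
        have "h + 1/(s0+b) \<in> S" using fS'[OF s10] G1 by simp
        hence "h + 1/(s0+b) = t0" using S1 by simp
        hence A: "1/(s0+b) = t0 - h" by (metis add_diff_cancel_left')
        have B: "1/s0 = t0 - h" by (simp add: s0_def)
        have "inverse (s0+b) = inverse s0" using A B by (simp add: inverse_eq_divide)
        hence "s0 + b = s0" by simp
        thus False using b0 by simp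
      qed
      thus ?thesis using True False kk by (simp add: S_def f_def D_def)
    next
      case nb: False
      define phi where "phi = (\<lambda>s. F * s^3 + c * s)"
      have inj: "inj phi"
      proof (rule injI)
        fix x y assume "phi x = phi y"
        hence e: "F * (x - y)^3 + c * (x - y) = 0"
        proof -
          have "F * (x - y)^3 + c * (x - y) = phi x - phi y + 3 * (F*x*y*(y - x))"
            unfolding phi_def by algebra
          thus ?thesis using th \<open>phi x = phi y\<close> by simp
        qed
        show "x = y"
        proof (rule ccontr)
          assume "x \<noteq> y"
          have "(x - y) * (F*(x-y)^2 + c) = F * (x - y)^3 + c * (x - y)" by algebra
          hence "F * (x - y)^2 + c = 0" using e \<open>x \<noteq> y\<close> by simp
          hence "F*(x-y)^2 = -c" by (simp add: eq_neg_iff_add_eq_0)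
          hence "(x-y)^2 = - c / F" using F0 by (subst nonzero_eq_divide_eq) (auto simp: mult.commute)
          thus False using nb by blast
        qed
      qed
      have "surj phi" using finite_UNIV_inj_surj[OF _ inj] by simp
      then obtain s0 where s0: "phi s0 = -1" by (metis surjD)
      have s00: "s0 \<noteq> 0" using s0 by (auto simp: phi_def)
      have t0S: "h + 1/s0 \<in> S" using fS'[OF s00] s0 by (simp add: phi_def)
      have "S = {h + 1/s0}"
      proof (intro equalityI subsetI)
        fix t assume tS: "t \<in> S"
        hence th': "t \<noteq> h" using hS by auto
        have "phi (1/(t-h)) = -1" using fS[OF th'] tS by (simp add: phi_def eq_neg_iff_add_eq_0)
        hence "1/(t-h) = s0" using inj s0 by (metis injD)
        hence "inverse (t - h) = s0" by (simp add: inverse_eq_divide)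
        hence "t - h = inverse s0" by (metis inverse_inverse_eq)
        hence "t - h = 1/s0" by (simp add: inverse_eq_divide)
        thus "t \<in> {h + 1/s0}" by (metis add.commute diff_add_cancel singletonI)
      qed (use t0S in simp)
      hence "card S = 1" by simp
      thus ?thesis using nb False kk by (simp add: S_def f_def D_def)
    qed
  qed
qed

theorem lemma8p3:
  fixes mu :: "'a::{field,finite}"
  assumes "card (UNIV::'a set) mod 3 = 0"
    and "mu \<noteq> 0" and "mu \<noteq> 1"
  shows "N1t mu = card {c::'a. c \<noteq> 0 \<and> mu * c ^ 4 + c ^ 2 + 1 \<noteq> 0 \<and>
           eta (c ^ 4 / (mu * c ^ 4 + c ^ 2 + 1)) = -1}"
proof -
  have t3: "(3::'a) = 0" using char3 assms(1) by blast
  have "{c::'a. c \<noteq> 0 \<and> card {t::'a. t ^ 3 + c * t ^ 2 - t - mu * c = 0} = 1}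
      = {c::'a. c \<noteq> 0 \<and> mu * c ^ 4 + c ^ 2 + 1 \<noteq> 0 \<and>
           eta (c ^ 4 / (mu * c ^ 4 + c ^ 2 + 1)) = -1}"
  proof (intro Collect_cong)
    fix c :: 'a
    show "(c \<noteq> 0 \<and> card {t::'a. t ^ 3 + c * t ^ 2 - t - mu * c = 0} = 1) =
      (c \<noteq> 0 \<and> mu * c ^ 4 + c ^ 2 + 1 \<noteq> 0 \<and> eta (c ^ 4 / (mu * c ^ 4 + c ^ 2 + 1)) = -1)"
    proof (cases "c = 0")
      case False
      show ?thesis using key[OF t3 False, of mu] False by (auto simp: eta_def)
    qed simp
  qed
  thus ?thesis by (simp add: N1t_def)
qed

end
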